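(* For $n\ge3$ and every integer $\ell$ with $0<\ell\le d-1$, one has $N(\ell)=0$.
   Context: Sylvester numbers: $s_0=2$, $s_{k+1}=1+\prod_{i=0}^ks_i$. Fix $n$, $d=\prod_{i=0}^ns_i$, $a_i=d/s_i$ for $0\le i\le n$, $a_{n+1}=1$. For $\ell\in\{0,\dots,d-1\}$ let $\tilde\theta_i(\ell)=\{\ell/s_i\}$ (fractional part) for $0\le i\le n$ and $\tilde\theta_{n+1}(\ell)=\ell/d$; $T_0(\ell)=\{i\in\{0,\dots,n+1\}:\tilde\theta_i(\ell)=0\}$, $T_1(\ell)=\{0,\dots,n+1\}\setminus T_0(\ell)$; $A(\ell)=\sum_{i\in T_1(\ell)}(\frac d2-a_i)$, $B(\ell)=\sum_{i\in T_1(\ell)}(d\tilde\theta_i(\ell)-\frac d2)$. $N(\ell)$ is the number of integer tuples $(k_i)_{i\in T_0(\ell)}$ with $0\le k_i\le s_i-2$ for $0\le i\le n$ and $0\le k_{n+1}\le d-2$ (if $n+1\in T_0(\ell)$), such that $A(\ell)+\sum_{i\in T_0(\ell)}k_ia_i=d$ and $B(\ell)=0$ (so $N(\ell)=0$ if $B(\ell)\ne0$). *)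

theory Defs
  imports Complex_Main
begin

fun sylv :: "nat \<Rightarrow> nat" where
  "sylv 0 = 2"
| "sylv (Suc k) = 1 + (\<Prod>i\<le>k. sylv i)"

definition sd :: "nat \<Rightarrow> nat" where
  "sd n = (\<Prod>i\<le>n. sylv i)"

definition sa :: "nat \<Rightarrow> nat \<Rightarrow> nat" where
  "sa n i = (if i \<le> n then sd n div sylv i else 1)"

definition stheta :: "nat \<Rightarrow> nat \<Rightarrow> nat \<Rightarrow> real" where
  "stheta n l i = (if i \<le> n then frac (real l / real (sylv i)) else real l / real (sd n))"

definition sT0 :: "nat \<Rightarrow> nat \<Rightarrow> nat set" where
  "sT0 n l = {i \<in> {0..n+1}. stheta n l i = 0}"

definition sT1 :: "nat \<Rightarrow> nat \<Rightarrow> nat set" where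
  "sT1 n l = {0..n+1} - sT0 n l"

definition sA :: "nat \<Rightarrow> nat \<Rightarrow> real" where
  "sA n l = (\<Sum>i\<in>sT1 n l. real (sd n) / 2 - real (sa n i))"

definition sB :: "nat \<Rightarrow> nat \<Rightarrow> real" where
  "sB n l = (\<Sum>i\<in>sT1 n l. real (sd n) * stheta n l i - real (sd n) / 2)"

definition sbound :: "nat \<Rightarrow> nat \<Rightarrow> nat" where
  "sbound n i = (if i \<le> n then sylv i - 2 else sd n - 2)"

text \<open>N(l): number of tuples (k_i)_(i in T0(l)), represented as functions
  nat \<Rightarrow> nat that vanish outside T0(l).\<close>
definition sN :: "nat \<Rightarrow> nat \<Rightarrow> nat" where
  "sN n l = card {k :: nat \<Rightarrow> nat.
      (\<forall>i. i \<notin> sT0 n l \<longrightarrow> k i = 0) \<and>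
      (\<forall>i\<in>sT0 n l. k i \<le> sbound n i) \<and>
      sA n l + (\<Sum>i\<in>sT0 n l. real (k i) * real (sa n i)) = real (sd n) \<and>
      sB n l = 0}"

end

theory Submission imports Defs begin

lemma sylv_ge2: "sylv i \<ge> 2"
proof (induction i rule: less_induct)
  case (less i)
  show ?case
  proof (cases i)
    case 0 then show ?thesis by simp
  next
    case (Suc k)
    have "(\<Prod>m\<le>k. sylv m) > 0"
      using less Suc by (intro prod_pos) (auto simp: less_Suc_eq_le intro: order.strict_trans2[of 0 2])
    then show ?thesis using Suc by (simp add: Suc_le_eq)
  qed
qed

lemma sylv_prod_lt: "(\<Prod>m<j. sylv m) = sylv j - 1"
  by (cases j) (auto simp: lessThan_Suc_atMost)

lemma sd_pos: "sd n > 0"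
  unfolding sd_def using sylv_ge2 by (intro prod_pos) (auto intro: order.strict_trans2[of 0 2])

lemma sylv_dvd_sd: "i \<le> n \<Longrightarrow> sylv i dvd sd n"
  unfolding sd_def by (intro dvd_prodI) auto

lemma sylv_next: "sylv (Suc n) = sd n + 1"
  by (simp add: sd_def)

lemma sd_Suc: "sd (Suc n) = sd n * sylv (Suc n)"
  by (simp add: sd_def)

lemma sylv_dvd_later: "i < j \<Longrightarrow> int (sylv i) dvd int (sylv j) - 1"
proof -
  assume "i < j"
  then obtain k where k: "j = Suc k" "i \<le> k" by (cases j) auto
  have "sylv i dvd (\<Prod>m\<le>k. sylv m)" using k by (intro dvd_prodI) auto
  then show ?thesis using k by (simp add: of_nat_prod[symmetric] del: of_nat_prod)
qed

lemma prod_later_cong: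
  assumes "finite S" "\<forall>i\<in>S. j < i"
  shows "int (sylv j) dvd (\<Prod>i\<in>S. int (sylv i)) - 1"
  using assms
proof (induction S rule: finite_induct)
  case empty then show ?case by simp
next
  case (insert x F)
  let ?P = "(\<Prod>i\<in>F. int (sylv i))"
  have h1: "int (sylv j) dvd ?P - 1" using insert by auto
  have h2: "int (sylv j) dvd int (sylv x) - 1" using insert by (intro sylv_dvd_later) auto
  have "(\<Prod>i\<in>insert x F. int (sylv i)) - 1 = int (sylv x) * (?P - 1) + (int (sylv x) - 1)"
    using insert by (simp add: algebra_simps)
  moreover have "int (sylv j) dvd int (sylv x) * (?P - 1) + (int (sylv x) - 1)"
    using h1 h2 by (intro dvd_add dvd_mult) auto
  ultimately show ?case by (simp add: add_diff_eq)
qed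

lemma sa_prod: "i \<le> n \<Longrightarrow> sa n i = (\<Prod>m\<in>{..n}-{i}. sylv m)"
proof -
  assume i: "i \<le> n"
  have "sd n = sylv i * (\<Prod>m\<in>{..n}-{i}. sylv m)"
    unfolding sd_def using i by (subst prod.remove[of _ i]) auto
  then show ?thesis using i sylv_ge2[of i] by (simp add: sa_def)
qed

lemma sa_dvd_other: "i \<le> n \<Longrightarrow> j \<le> n \<Longrightarrow> i \<noteq> j \<Longrightarrow> sylv j dvd sa n i"
  by (simp add: sa_prod, intro dvd_prodI) auto

lemma sa_cong: "j \<le> n \<Longrightarrow> int (sylv j) dvd int (sa n j) + 1"
proof -
  assume j: "j \<le> n"
  have split: "{..n}-{j} = {..<j} \<union> {j<..n}" using j by auto
  have "sa n j = (\<Prod>m<j. sylv m) * (\<Prod>m\<in>{j<..n}. sylv m)"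
    using j by (simp add: sa_prod split, subst prod.union_disjoint) auto
  then have e: "int (sa n j) = (int (sylv j) - 1) * (\<Prod>m\<in>{j<..n}. int (sylv m))"
    using sylv_ge2[of j] by (simp add: sylv_prod_lt of_nat_diff)
  obtain q where q: "(\<Prod>m\<in>{j<..n}. int (sylv m)) - 1 = int (sylv j) * q"
    using prod_later_cong[of "{j<..n}" j] by (auto elim: dvdE)
  have "int (sa n j) + 1 = int (sylv j) * ((\<Prod>m\<in>{j<..n}. int (sylv m)) - q)"
    unfolding e using q by (simp add: algebra_simps)
  then show ?thesis by simp
qed

lemma sa_sum: "(\<Sum>i\<le>n. sa n i) = sd n - 1"
proof (induction n)
  case 0 then show ?case by (simp add: sa_def sd_def)
next
  case (Suc n)
  have "(\<Sum>i\<le>Suc n. sa (Suc n) i) = (\<Sum>i\<le>n. sa (Suc n) i) + sa (Suc n) (Suc n)" by simp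
  also have "(\<Sum>i\<le>n. sa (Suc n) i) = (\<Sum>i\<le>n. sa n i * sylv (Suc n))"
  proof (rule sum.cong)
    fix i assume "i \<in> {..n}"
    then have "i \<le> n" by simp
    then show "sa (Suc n) i = sa n i * sylv (Suc n)"
      unfolding sa_def sd_Suc using sylv_dvd_sd[of i n] by (simp add: dvd_div_mult)
  qed simp
  also have "\<dots> = (sd n - 1) * sylv (Suc n)" by (simp only: sum_distrib_right[symmetric] Suc.IH)
  also have "sa (Suc n) (Suc n) = sd n" using sylv_ge2[of "Suc n"] unfolding sa_def sd_Suc by (simp del: sylv.simps)
  finally have "(\<Sum>i\<le>Suc n. sa (Suc n) i) = (sd n - 1) * (sd n + 1) + sd n"
    by (simp only: sylv_next)
  moreover have "(D - 1) * (D + 1) + D = D * (D + 1) - 1" if "D > 0" for D :: nat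
    using that by (cases D) (auto simp: algebra_simps)
  ultimately show ?case using sd_pos[of n] by (simp only: sd_Suc sylv_next)
qed

lemma frac_nat: "s > 0 \<Longrightarrow> frac (real l / real s) = real (l mod s) / real s"
proof -
  assume s: "s > 0"
  have "real l = real s * real (l div s) + real (l mod s)"
    by (metis of_nat_add of_nat_mult div_mult_mod_eq mult.commute)
  then have "real l / real s = real (l div s) + real (l mod s) / real s" using s by (simp add: field_simps)
  moreover have "\<lfloor>real (l mod s) / real s\<rfloor> = 0" using s by (simp add: floor_eq_iff)
  ultimately show ?thesis unfolding frac_def using floor_divide_of_nat_eq[of l s] by simp
qed

theorem lemma6p8:
  fixes n l :: nat
  assumes "n \<ge> 3" and "0 < l" and "l \<le> sd n - 1"
  shows "sN n l = 0"
proof (rule ccontr)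
  assume "sN n l \<noteq> 0"
  then obtain k where kz: "\<forall>i. i \<notin> sT0 n l \<longrightarrow> k i = 0"
    and kb: "\<forall>i\<in>sT0 n l. k i \<le> sbound n i"
    and eA: "sA n l + (\<Sum>i\<in>sT0 n l. real (k i) * real (sa n i)) = real (sd n)"
    and eB: "sB n l = 0"
  proof -
    let ?S = "{k :: nat \<Rightarrow> nat.
      (\<forall>i. i \<notin> sT0 n l \<longrightarrow> k i = 0) \<and>
      (\<forall>i\<in>sT0 n l. k i \<le> sbound n i) \<and>
      sA n l + (\<Sum>i\<in>sT0 n l. real (k i) * real (sa n i)) = real (sd n) \<and>
      sB n l = 0}"
    have "card ?S \<noteq> 0" using \<open>sN n l \<noteq> 0\<close> unfolding sN_def .
    then have "?S \<noteq> {}" by (intro notI) simp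
    then obtain k where "k \<in> ?S" by blast
    then show ?thesis using that by blast
  qed
  define T0 where "T0 = sT0 n l"
  define T1 where "T1 = sT1 n l"
  define d where "d = sd n"
  have dpos: "d > 0" using sd_pos d_def by simp
  have T0sub: "T0 \<subseteq> {0..n+1}" unfolding T0_def sT0_def by auto
  have T1eq: "T1 = {0..n+1} - T0" unfolding T1_def T0_def sT1_def by simp
  have n1: "n+1 \<notin> T0" unfolding T0_def sT0_def stheta_def using assms(2) dpos d_def by auto
  have T0n: "T0 \<subseteq> {0..n}" using T0sub n1 by (auto simp: le_Suc_eq)
  have T0char: "i \<in> T0 \<longleftrightarrow> sylv i dvd l" if "i \<le> n" for i
  proof -
    have "stheta n l i = real (l mod sylv i) / real (sylv i)"
      using that sylv_ge2[of i] by (simp add: stheta_def frac_nat)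
    moreover have "real (sylv i) > 0" using sylv_ge2[of i] by simp
    ultimately have "stheta n l i = 0 \<longleftrightarrow> l mod sylv i = 0" by simp
    then show ?thesis using that unfolding T0_def sT0_def by (auto simp: dvd_eq_mod_eq_0)
  qed
  have fin: "finite T0" "finite T1" using T0sub T1eq finite_subset by auto
  show False
  proof (cases "T0 = {}")
    case True
    then have T1e: "T1 = {0..n+1}" using T1eq by simp
    have s1: "(\<Sum>i\<in>{0..n+1}. real (sa n i)) = real d"
    proof -
      have "(\<Sum>i\<in>{0..n+1}. real (sa n i)) = (\<Sum>i\<le>n. real (sa n i)) + real (sa n (n+1))"
        by (simp add: atLeast0AtMost)
      also have "(\<Sum>i\<le>n. real (sa n i)) = real d - 1"
        using sa_sum[of n] dpos d_def by (simp add: of_nat_sum[symmetric] of_nat_diff del: of_nat_sum)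
      finally show ?thesis by (simp add: sa_def)
    qed
    have "sA n l = real (n+2) * (real d / 2) - real d"
      unfolding sA_def T1_def[symmetric] T1e d_def[symmetric]
      by (simp only: sum_subtractf s1) simp
    then have "real (n+2) * (real d / 2) - real d = real d" using eA True T0_def d_def by simp
    then have "real n * real d = 2 * real d" by (simp add: algebra_simps)
    then have "real n = 2" using dpos by simp
    then show False using assms(1) by simp
  next
    case False
    then obtain j where jT0: "j \<in> T0" by auto
    have jn: "j \<le> n" using jT0 T0n by auto
    define D where "D i = (if i \<le> n then int (sa n i) * int (l mod sylv i) else int l)" for i
    define g where "g i = (if i \<in> T1 then D i - int (sa n i) else int (k i) * int (sa n i))" for i
    have Dreal: "real d * stheta n l i = real_of_int (D i)" if "i \<le> n+1" for i
    proof (cases "i \<le> n")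
      case True
      have "real d = real (sa n i) * real (sylv i)"
        using True sylv_dvd_sd[of i n] d_def by (simp add: sa_def of_nat_mult[symmetric] del: of_nat_mult)
      then show ?thesis using True sylv_ge2[of i] by (simp add: stheta_def D_def frac_nat)
    next
      case False
      then show ?thesis using dpos d_def by (simp add: stheta_def D_def)
    qed
    have "sA n l + sB n l = (\<Sum>i\<in>T1. real d * stheta n l i - real (sa n i))"
      unfolding sA_def sB_def T1_def d_def by (simp add: sum.distrib[symmetric])
    also have "\<dots> = (\<Sum>i\<in>T1. real_of_int (g i))"
      by (rule sum.cong) (auto simp: g_def Dreal T1eq)
    finally have ab: "sA n l + sB n l = (\<Sum>i\<in>T1. real_of_int (g i))" .
    have "(\<Sum>i\<in>sT0 n l. real (k i) * real (sa n i)) = (\<Sum>i\<in>T0. real_of_int (g i))"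
      unfolding T0_def[symmetric] by (rule sum.cong) (auto simp: g_def T1eq)
    then have "(\<Sum>i\<in>T1. real_of_int (g i)) + (\<Sum>i\<in>T0. real_of_int (g i)) = real d"
      using eA eB ab d_def by simp
    moreover have "{0..n+1} = T1 \<union> T0" "T1 \<inter> T0 = {}" using T1eq T0sub by auto
    ultimately have "(\<Sum>i\<in>{0..n+1}. real_of_int (g i)) = real d"
      using fin by (simp add: sum.union_disjoint)
    then have sg: "(\<Sum>i\<in>{0..n+1}. g i) = int d"
      by (metis of_int_eq_iff of_int_of_nat_eq of_int_sum)
    have "(\<Sum>i\<in>{0..n+1}. g i) = g (n+1) + (\<Sum>i\<in>{0..n}. g i)"
      by (simp add: add.commute)
    also have "(\<Sum>i\<in>{0..n}. g i) = g j + (\<Sum>i\<in>{0..n}-{j}. g i)"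
      using jn by (subst sum.remove[of _ j]) auto
    finally have split: "g (n+1) + g j + (\<Sum>i\<in>{0..n}-{j}. g i) = int d" using sg by simp
    have sj: "int (sylv j) dvd (\<Sum>i\<in>{0..n}-{j}. g i)"
    proof (rule dvd_sum)
      fix i assume i: "i \<in> {0..n}-{j}"
      then have "sylv j dvd sa n i" using jn by (intro sa_dvd_other) auto
      then have "int (sylv j) dvd int (sa n i)" by simp
      then show "int (sylv j) dvd g i" using i
        by (auto simp: g_def D_def algebra_simps)
    qed
    have gn1: "g (n+1) = int l - 1" using n1 T1eq by (simp add: g_def D_def sa_def)
    have gj: "g j = int (k j) * int (sa n j)" using jT0 T1eq by (simp add: g_def)
    have dd: "int (sylv j) dvd int d" using sylv_dvd_sd[OF jn] d_def by simp
    have dl: "int (sylv j) dvd int l" using T0char[OF jn] jT0 by simp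
    have da: "int (sylv j) dvd int (sa n j) + 1" using sa_cong[OF jn] .
    have "int (sylv j) dvd int d - (\<Sum>i\<in>{0..n}-{j}. g i) - int l - int (k j) * (int (sa n j) + 1)"
      by (rule dvd_diff[OF dvd_diff[OF dvd_diff[OF dd sj] dl] dvd_mult[OF da]])
    moreover have "int d - (\<Sum>i\<in>{0..n}-{j}. g i) - int l - int (k j) * (int (sa n j) + 1) = - (int (k j) + 1)"
      using split gn1 gj by (simp add: algebra_simps)
    ultimately have "int (sylv j) dvd - (int (k j) + 1)" by (simp only:)
    then have "int (sylv j) dvd int (k j) + 1" by (simp only: dvd_minus_iff)
    then have "int (sylv j) \<le> int (k j) + 1" by (intro zdvd_imp_le) auto
    moreover have "k j \<le> sylv j - 2" using kb jT0 jn T0_def by (auto simp: sbound_def)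
    ultimately show False using sylv_ge2[of j] by simp
  qed
qed

end
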